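(* Let $s>2$ be an integer, let $k$ be a positive even integer, and let $a_1,\dots,a_k$ be positive integers with $a_{2i-1}+a_{2i}=s$ for $i=1,\dots,k/2$. If \[ k \ \ge\ 2^{\frac{s}{2}+1}\cdot\left\lceil \left(\frac{s+3}{s-2}\right)^{\frac{s}{2}-1}\left(\frac{5s+6}{5s-6}\right)+1\right\rceil, \] then \[ \Big[0,\tfrac{k}{2}\Big]=\Big\{\sum_{i=1}^{k/2} x_{2i-1}^{a_{2i-1}}x_{2i}^{a_{2i}} \;:\; x_1,\dots,x_k\in C\Big\}. \]
   Context: $C\subseteq[0,1]$ denotes the classical middle-thirds (ternary) Cantor set. *)

theory Defs
  imports "HOL-Analysis.Analysis"
begin

fun cantor_stage :: "nat \<Rightarrow> real set" where
  "cantor_stage 0 = {0..1}"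
| "cantor_stage (Suc n) = (\<lambda>x. x / 3) ` cantor_stage n \<union> (\<lambda>x. x / 3 + 2 / 3) ` cantor_stage n"

definition cantor_set :: "real set" where
  "cantor_set = (\<Inter>n. cantor_stage n)"

end

theory Submission
  imports Defs
begin

fun cE :: "nat \<Rightarrow> real set" where
  "cE 0 = {0}"
| "cE (Suc n) = (\<lambda>x. x / 3) ` cE n \<union> (\<lambda>x. x / 3 + 2 / 3) ` cE n"

lemma cE_interval: "c \<in> cE n \<Longrightarrow> {c..c + (1/3)^n} \<subseteq> cantor_stage n"
proof (induction n arbitrary: c)
  case 0 then show ?case by auto
next
  case (Suc n)
  from Suc.prems consider c' where "c' \<in> cE n" "c = c'/3" | c' where "c' \<in> cE n" "c = c'/3 + 2/3" by auto
  then show ?case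
  proof cases
    case 1
    show ?thesis
    proof
      fix y assume y: "y \<in> {c..c + (1/3)^Suc n}"
      have "3*y \<in> {c'..c' + (1/3)^n}" using y 1 by auto
      hence "3*y \<in> cantor_stage n" using Suc.IH[OF 1(1)] by auto
      hence "(3*y)/3 \<in> (\<lambda>x. x / 3) ` cantor_stage n" by blast
      thus "y \<in> cantor_stage (Suc n)" by simp
    qed
  next
    case 2
    show ?thesis
    proof
      fix y assume y: "y \<in> {c..c + (1/3)^Suc n}"
      have "3*y - 2 \<in> {c'..c' + (1/3)^n}" using y 2 by auto
      hence "3*y - 2 \<in> cantor_stage n" using Suc.IH[OF 2(1)] by auto
      hence "(3*y-2)/3 + 2/3 \<in> (\<lambda>x. x / 3 + 2/3) ` cantor_stage n" by blast
      moreover have "(3*y-2)/3 + 2/3 = y" by (simp add: field_simps)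
      ultimately show "y \<in> cantor_stage (Suc n)" by simp
    qed
  qed
qed

lemma stage_Suc_sub: "cantor_stage (Suc n) \<subseteq> cantor_stage n"
proof (induction n)
  case 0 show ?case by auto
next
  case (Suc n)
  have "cantor_stage (Suc (Suc n)) = (\<lambda>x. x / 3) ` cantor_stage (Suc n) \<union> (\<lambda>x. x / 3 + 2 / 3) ` cantor_stage (Suc n)" by simp
  also have "\<dots> \<subseteq> (\<lambda>x. x / 3) ` cantor_stage n \<union> (\<lambda>x. x / 3 + 2 / 3) ` cantor_stage n"
    using Suc.IH by blast
  finally show ?case by simp
qed

lemma stage_anti: "m \<le> n \<Longrightarrow> cantor_stage n \<subseteq> cantor_stage m"
proof (induction n)
  case 0 thus ?case by simp
next
  case (Suc n)
  show ?case
  proof (cases "m = Suc n")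
    case False
    hence "m \<le> n" using Suc.prems by simp
    thus ?thesis using Suc.IH stage_Suc_sub by blast
  qed simp
qed

lemma cantor_subset: "cantor_set \<subseteq> {0..1}"
  unfolding cantor_set_def by (metis INT_lower UNIV_I cantor_stage.simps(1))

lemma in_cantorI: "(\<And>N. N \<ge> n0 \<Longrightarrow> x \<in> cantor_stage N) \<Longrightarrow> x \<in> cantor_set"
proof -
  assume h: "\<And>N. N \<ge> n0 \<Longrightarrow> x \<in> cantor_stage N"
  have "x \<in> cantor_stage M" for M
    using h[of "max M n0"] stage_anti[of M "max M n0"] by auto
  thus ?thesis unfolding cantor_set_def by auto
qed

lemma cE_Suc: "c \<in> cE n \<Longrightarrow> c \<in> cE (Suc n) \<and> c + 2*(1/3)^(Suc n) \<in> cE (Suc n)"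
proof (induction n arbitrary: c)
  case 0
  hence "c = 0" by simp
  have "(2::real)/3 = 0/3 + 2/3" by simp
  thus ?case using \<open>c = 0\<close> by (auto simp: image_iff)
next
  case (Suc n)
  from Suc.prems consider c' where "c' \<in> cE n" "c = c'/3" | c' where "c' \<in> cE n" "c = c'/3 + 2/3" by auto
  then show ?case
  proof cases
    case 1
    from Suc.IH[OF 1(1)] have a: "c' \<in> cE (Suc n)" and b: "c' + 2*(1/3)^Suc n \<in> cE (Suc n)" by auto
    have "c \<in> (\<lambda>x. x/3) ` cE (Suc n)" using a 1 by auto
    moreover have "c + 2*(1/3)^Suc (Suc n) = (\<lambda>x. x/3) (c' + 2*(1/3)^Suc n)" using 1 by simp
    hence "c + 2*(1/3)^Suc (Suc n) \<in> (\<lambda>x. x/3) ` cE (Suc n)" using b by (rule image_eqI)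
    moreover have eq: "cE (Suc (Suc n)) = (\<lambda>x. x/3) ` cE (Suc n) \<union> (\<lambda>x. x/3+2/3) ` cE (Suc n)" by (rule cE.simps(2))
    ultimately show ?thesis unfolding eq by blast
  next
    case 2
    from Suc.IH[OF 2(1)] have a: "c' \<in> cE (Suc n)" and b: "c' + 2*(1/3)^Suc n \<in> cE (Suc n)" by auto
    have "c \<in> (\<lambda>x. x/3 + 2/3) ` cE (Suc n)" using a 2 by auto
    moreover have "c + 2*(1/3)^Suc (Suc n) = (\<lambda>x. x/3 + 2/3) (c' + 2*(1/3)^Suc n)"
    proof -
      have p: "(1/3::real)^Suc (Suc n) = (1/3)^Suc n / 3" by simp
      show ?thesis unfolding 2 p by (simp add: field_simps)
    qed
    hence "c + 2*(1/3)^Suc (Suc n) \<in> (\<lambda>x. x/3 + 2/3) ` cE (Suc n)" using b by (rule image_eqI)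
    moreover have eq: "cE (Suc (Suc n)) = (\<lambda>x. x/3) ` cE (Suc n) \<union> (\<lambda>x. x/3+2/3) ` cE (Suc n)" by (rule cE.simps(2))
    ultimately show ?thesis unfolding eq by blast
  qed
qed

lemma cE_le: "c \<in> cE n \<Longrightarrow> n \<le> N \<Longrightarrow> c \<in> cE N"
proof (induction N)
  case 0 thus ?case by simp
next
  case (Suc N)
  show ?case
  proof (cases "n = Suc N")
    case False
    hence "c \<in> cE N" using Suc by simp
    thus ?thesis using cE_Suc by blast
  qed (use Suc in simp)
qed

lemma cE_cantor: "c \<in> cE n \<Longrightarrow> c \<in> cantor_set"
proof (rule in_cantorI[of n])
  fix N assume "c \<in> cE n" "n \<le> N"
  hence "c \<in> cE N" by (rule cE_le)
  thus "c \<in> cantor_stage N" using cE_interval[of c N] by auto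
qed

lemma cE_right: "c \<in> cE n \<Longrightarrow> n \<le> N \<Longrightarrow> \<exists>c'\<in>cE N. c' + (1/3)^N = c + (1/3)^n"
proof (induction N)
  case 0 thus ?case by auto
next
  case (Suc N)
  show ?case
  proof (cases "n = Suc N")
    case True thus ?thesis using Suc.prems by auto
  next
    case False
    hence "n \<le> N" using Suc.prems by simp
    then obtain c' where c': "c' \<in> cE N" "c' + (1/3)^N = c + (1/3)^n" using Suc.IH Suc.prems by auto
    have "c' + 2*(1/3)^Suc N \<in> cE (Suc N)" using cE_Suc[OF c'(1)] by simp
    moreover have "(c' + 2*(1/3)^Suc N) + (1/3)^Suc N = c + (1/3)^n" using c'(2) by simp
    ultimately show ?thesis by blast
  qed
qed

lemma cE_right_cantor: "c \<in> cE n \<Longrightarrow> c + (1/3)^n \<in> cantor_set"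
proof (rule in_cantorI[of n])
  fix N assume "c \<in> cE n" "n \<le> N"
  then obtain c' where c': "c'\<in>cE N" "c' + (1/3)^N = c + (1/3)^n" using cE_right by blast
  have "c' + (1/3)^N \<in> {c'..c' + (1/3)^N}" by simp
  thus "c + (1/3)^n \<in> cantor_stage N" using cE_interval[OF c'(1)] c'(2) by auto
qed

lemma zero_cantor: "0 \<in> cantor_set" using cE_cantor[of 0 0] by simp
lemma one_cantor: "1 \<in> cantor_set" using cE_right_cantor[of 0 0] by simp
lemma third_cantor: "1/3 \<in> cantor_set" using cE_right_cantor[of 0 1] by (simp add: image_iff)
lemma twothirds_cantor: "2/3 \<in> cantor_set"
proof -
  have "2/3 \<in> cE 1" by (simp add: image_iff)
  thus ?thesis by (rule cE_cantor)
qed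

lemma cE_top: "1 - (1/3::real)^L \<in> cE L"
proof (induction L)
  case 0 thus ?case by simp
next
  case (Suc L)
  have "1 - (1/3::real)^Suc L = (1 - (1/3)^L)/3 + 2/3" by (simp add: field_simps)
  moreover have "(\<lambda>x. x/3+2/3) (1 - (1/3)^L) \<in> (\<lambda>x. x/3+2/3) ` cE L" using Suc.IH by (rule imageI)
  ultimately show ?case by (simp only: cE.simps(2) Un_iff) simp
qed

lemma cantor_div3: "x \<in> cantor_set \<Longrightarrow> x/3 \<in> cantor_set"
proof -
  assume "x \<in> cantor_set"
  hence "x \<in> cantor_stage n" for n unfolding cantor_set_def by auto
  hence "x/3 \<in> cantor_stage (Suc n)" for n by simp
  hence "x/3 \<in> cantor_stage n" for n using stage_Suc_sub by blast
  thus ?thesis unfolding cantor_set_def by auto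
qed

lemma pow_diff_bounds:
  fixes y d :: real
  assumes "0 \<le> y" "0 \<le> d"
  shows "real b * y^(b-1) * d \<le> (y+d)^b - y^b \<and> (y+d)^b - y^b \<le> real b * (y+d)^(b-1) * d"
proof (cases "d = 0")
  case True thus ?thesis by simp
next
  case False
  hence "y < y + d" using assms by simp
  from MVT2[OF this, of "\<lambda>x. x^b" "\<lambda>x. real b * x^(b - Suc 0)"]
  obtain z where z: "y < z" "z < y + d" "(y+d)^b - y^b = (y + d - y) * (real b * z^(b - Suc 0))"
    using DERIV_pow by blast
  have "y^(b-1) \<le> z^(b-1)" using z assms by (intro power_mono) auto
  moreover have "z^(b-1) \<le> (y+d)^(b-1)" using z assms by (intro power_mono) auto
  ultimately show ?thesis using z(3) assms
    by (auto intro!: mult_left_mono mult_right_mono simp: mult.commute mult.left_commute)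
qed

lemma refine_one:
  fixes c g :: "nat \<Rightarrow> real" and q j b :: nat
  assumes j: "j < q"
    and lo: "(\<Sum>i<q. c i ^ b) \<le> \<tau>" and hi: "\<tau> \<le> (\<Sum>i<q. (c i + g i)^b)"
    and gap: "(c j + 2*g j/3)^b - (c j + g j/3)^b \<le> (\<Sum>i\<in>{..<q}-{j}. (c i + g i)^b - c i ^ b)"
  shows "\<exists>c'. (c' = c j \<or> c' = c j + 2*g j/3) \<and> (\<Sum>i<q. ((c(j:=c')) i)^b) \<le> \<tau>
               \<and> \<tau> \<le> (\<Sum>i<q. ((c(j:=c')) i + (g(j:= g j/3)) i)^b)"
proof -
  define A where "A = (\<Sum>i\<in>{..<q}-{j}. c i ^ b)"
  define B where "B = (\<Sum>i\<in>{..<q}-{j}. (c i + g i)^b)"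
  have jq: "j \<in> {..<q}" using j by simp
  have split: "\<And>F. (\<Sum>i<q. F i) = F j + (\<Sum>i\<in>{..<q}-{j}. F i)"
    using sum.remove[OF _ jq] by auto
  have oth: "\<And>F G. (\<Sum>i\<in>{..<q}-{j}. F i) = (\<Sum>i\<in>{..<q}-{j}. G i) \<Longrightarrow> True" by simp
  have eqo1: "(\<Sum>i\<in>{..<q}-{j}. ((c(j:=x)) i)^b) = A" for x
    unfolding A_def by (rule sum.cong) auto
  have eqo2: "(\<Sum>i\<in>{..<q}-{j}. ((c(j:=x)) i + (g(j:=y)) i)^b) = B" for x y
    unfolding B_def by (rule sum.cong) auto
  have BA: "B - A = (\<Sum>i\<in>{..<q}-{j}. (c i + g i)^b - c i ^ b)"
    unfolding A_def B_def by (simp add: sum_subtractf)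
  have lo': "c j ^ b + A \<le> \<tau>" using lo split[of "\<lambda>i. c i ^ b"] A_def by simp
  have hi': "\<tau> \<le> (c j + g j)^b + B" using hi split[of "\<lambda>i. (c i + g i)^b"] B_def by simp
  show ?thesis
  proof (cases "\<tau> \<le> (c j + g j/3)^b + B")
    case True
    show ?thesis
    proof (intro exI conjI)
      show "c j = c j \<or> c j = c j + 2 * g j / 3" by simp
      have "(\<Sum>i<q. ((c(j:=c j)) i)^b) = c j ^ b + A"
        using split[of "\<lambda>i. ((c(j:=c j)) i)^b"] eqo1[of "c j"] by simp
      thus "(\<Sum>i<q. ((c(j:=c j)) i)^b) \<le> \<tau>" using lo' by simp
      have "(\<Sum>i<q. ((c(j:=c j)) i + (g(j:= g j/3)) i)^b) = (c j + g j/3)^b + B"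
        using split[of "\<lambda>i. ((c(j:=c j)) i + (g(j:= g j/3)) i)^b"] eqo2[of "c j" "g j/3"] by simp
      thus "\<tau> \<le> (\<Sum>i<q. ((c(j:=c j)) i + (g(j:= g j/3)) i)^b)" using True by simp
    qed
  next
    case False
    show ?thesis
    proof (intro exI conjI)
      show "c j + 2*g j/3 = c j \<or> c j + 2*g j/3 = c j + 2 * g j / 3" by simp
      have "(\<Sum>i<q. ((c(j:=c j + 2*g j/3)) i)^b) = (c j + 2*g j/3) ^ b + A"
        using split[of "\<lambda>i. ((c(j:=c j + 2*g j/3)) i)^b"] eqo1[of "c j + 2*g j/3"] by simp
      also have "\<dots> \<le> \<tau>" using False gap BA by linarith
      finally show "(\<Sum>i<q. ((c(j:=c j + 2*g j/3)) i)^b) \<le> \<tau>" .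
      have "(\<Sum>i<q. ((c(j:=c j + 2*g j/3)) i + (g(j:= g j/3)) i)^b) = (c j + 2*g j/3 + g j/3)^b + B"
        using split[of "\<lambda>i. ((c(j:=c j + 2*g j/3)) i + (g(j:= g j/3)) i)^b"] eqo2[of "c j + 2*g j/3" "g j/3"] by simp
      also have "c j + 2*g j/3 + g j/3 = c j + g j" by simp
      finally show "\<tau> \<le> (\<Sum>i<q. ((c(j:=c j + 2*g j/3)) i + (g(j:= g j/3)) i)^b)" using hi' by simp
    qed
  qed
qed

lemma round:
  fixes c :: "nat \<Rightarrow> real" and q b K :: nat
  assumes H1: "H \<le> 1" and p0: "0 \<le> p"
    and bal: "(real q - 1) * p^(b-1) \<ge> 1"
    and inv: "\<forall>i<q. c i \<in> cE K \<and> p \<le> c i \<and> c i + (1/3)^K \<le> H"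
    and lo: "(\<Sum>i<q. c i ^ b) \<le> \<tau>" and hi: "\<tau> \<le> (\<Sum>i<q. (c i + (1/3)^K)^b)"
  shows "\<exists>c'. (\<forall>i<q. c' i \<in> cE (Suc K) \<and> c i \<le> c' i \<and> c' i + (1/3)^(Suc K) \<le> c i + (1/3)^K)
              \<and> (\<Sum>i<q. c' i ^ b) \<le> \<tau> \<and> \<tau> \<le> (\<Sum>i<q. (c' i + (1/3)^(Suc K))^b)"
proof -
  define g0 :: real where "g0 = (1/3)^K"
  define g1 :: real where "g1 = (1/3)^Suc K"
  have g01: "g1 = g0/3" unfolding g0_def g1_def by simp
  have g0pos: "g0 > 0" unfolding g0_def by simp
  define G :: "nat \<Rightarrow> nat \<Rightarrow> real" where "G = (\<lambda>j i. if i < j then g1 else g0)"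
  have q1: "real q \<ge> 1"
  proof (rule ccontr)
    assume "\<not> real q \<ge> 1"
    hence "real q - 1 < 0" by simp
    moreover have "p^(b-1) \<ge> 0" using p0 by simp
    ultimately have "(real q - 1) * p^(b-1) \<le> 0" by (simp add: mult_nonpos_nonneg)
    thus False using bal by simp
  qed
  have claim: "j \<le> q \<Longrightarrow> \<exists>c'. (\<forall>i<q. (i < j \<longrightarrow> (c' i = c i \<or> c' i = c i + 2*g0/3)) \<and> (j \<le> i \<longrightarrow> c' i = c i))
      \<and> (\<Sum>i<q. c' i ^ b) \<le> \<tau> \<and> \<tau> \<le> (\<Sum>i<q. (c' i + G j i)^b)" for j
  proof (induction j)
    case 0
    have "G 0 = (\<lambda>i. g0)" unfolding G_def by auto
    thus ?case using lo hi g0_def by (intro exI[of _ c]) auto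
  next
    case (Suc j)
    hence jq: "j < q" by simp
    from Suc.IH jq obtain c' where c': "\<forall>i<q. (i < j \<longrightarrow> (c' i = c i \<or> c' i = c i + 2*g0/3)) \<and> (j \<le> i \<longrightarrow> c' i = c i)"
      and lo1: "(\<Sum>i<q. c' i ^ b) \<le> \<tau>" and hi1: "\<tau> \<le> (\<Sum>i<q. (c' i + G j i)^b)" by auto
    have cj: "c' j = c j" using c' jq by auto
    have Gjj: "G j j = g0" unfolding G_def by simp
    have cge: "c i \<le> c' i" if "i < q" for i using c' that g0pos by force
    have cjwin: "p \<le> c j" "c j + g0 \<le> H" using inv jq g0_def by auto
    have gapL: "(c' j + 2*G j j/3)^b - (c' j + G j j/3)^b \<le> real b * (g0/3)"
    proof -
      have "(c' j + G j j/3 + g0/3)^b - (c' j + G j j/3)^b \<le> real b * (c' j + G j j/3 + g0/3)^(b-1) * (g0/3)"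
        using pow_diff_bounds[of "c' j + G j j/3" "g0/3" b] cjwin p0 cj Gjj g0pos by auto
      also have "(c' j + G j j/3 + g0/3)^(b-1) \<le> 1"
        using cj Gjj cjwin p0 g0pos H1 by (intro power_le_one) auto
      hence "real b * (c' j + G j j/3 + g0/3)^(b-1) * (g0/3) \<le> real b * 1 * (g0/3)"
        using g0pos by (intro mult_right_mono mult_left_mono) auto
      finally show ?thesis using Gjj by (simp add: algebra_simps)
    qed
    have gapR: "real b * (g0/3) \<le> (\<Sum>i\<in>{..<q}-{j}. (c' i + G j i)^b - c' i ^ b)"
    proof -
      have each: "real b * p^(b-1) * g1 \<le> (c' i + G j i)^b - c' i ^ b" if "i \<in> {..<q}-{j}" for i
      proof -
        have iq: "i < q" using that by simp
        have cp: "p \<le> c' i" using cge[OF iq] inv iq by force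
        have Gg: "g1 \<le> G j i" unfolding G_def using g01 g0pos by auto
        have "real b * p^(b-1) * g1 \<le> real b * c' i^(b-1) * G j i"
          using cp p0 Gg g0pos g01 by (intro mult_mono power_mono) auto
        also have "\<dots> \<le> (c' i + G j i)^b - c' i ^ b"
          using pow_diff_bounds[of "c' i" "G j i" b] cp p0 Gg g01 g0pos by auto
        finally show ?thesis .
      qed
      have card: "card ({..<q}-{j}) = q - 1" using jq by simp
      have "real (q-1) * (real b * p^(b-1) * g1) \<le> (\<Sum>i\<in>{..<q}-{j}. (c' i + G j i)^b - c' i ^ b)"
        using sum_bounded_below[of "{..<q}-{j}" "real b * p^(b-1) * g1", OF each] card by simp
      moreover have "real (q-1) = real q - 1" using jq by simp
      moreover have "real b * (g0/3) \<le> (real q - 1) * (real b * p^(b-1) * g1)"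
      proof -
        have "real b * (g0/3) = real b * g1 * 1" using g01 by simp
        also have "real b * g1 * 1 \<le> real b * g1 * ((real q - 1) * p^(b-1))"
          using bal g0pos g01 by (intro mult_left_mono) auto
        also have "\<dots> = (real q - 1) * (real b * p^(b-1) * g1)" by (simp add: algebra_simps)
        finally show ?thesis .
      qed
      ultimately show ?thesis by simp
    qed
    from refine_one[OF jq lo1 hi1] gapL gapR
    obtain x where x: "x = c' j \<or> x = c' j + 2*G j j/3"
      and lo2: "(\<Sum>i<q. ((c'(j:=x)) i)^b) \<le> \<tau>"
      and hi2: "\<tau> \<le> (\<Sum>i<q. ((c'(j:=x)) i + ((G j)(j:= G j j/3)) i)^b)" by fastforce
    have GS: "(G j)(j:= G j j/3) = G (Suc j)" unfolding G_def using g01 by (auto simp: fun_eq_iff)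
    show ?case
    proof (intro exI[of _ "c'(j:=x)"] conjI allI impI)
      fix i assume "i < q"
      show "i < Suc j \<Longrightarrow> (c'(j:=x)) i = c i \<or> (c'(j:=x)) i = c i + 2*g0/3"
        using c' \<open>i<q\<close> x cj Gjj by (cases "i = j") auto
      show "Suc j \<le> i \<Longrightarrow> (c'(j:=x)) i = c i" using c' \<open>i<q\<close> by auto
    next
      show "(\<Sum>i<q. ((c'(j:=x)) i)^b) \<le> \<tau>" by (rule lo2)
      show "\<tau> \<le> (\<Sum>i<q. ((c'(j:=x)) i + G (Suc j) i)^b)" using hi2 GS by simp
    qed
  qed
  from claim[of q] obtain c' where c': "\<forall>i<q. (c' i = c i \<or> c' i = c i + 2*g0/3)"
      and lo1: "(\<Sum>i<q. c' i ^ b) \<le> \<tau>" and hi1: "\<tau> \<le> (\<Sum>i<q. (c' i + G q i)^b)" by auto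
  have "(\<Sum>i<q. (c' i + G q i)^b) = (\<Sum>i<q. (c' i + (1/3)^Suc K)^b)"
    unfolding G_def g1_def by (rule sum.cong) auto
  hence hi2: "\<tau> \<le> (\<Sum>i<q. (c' i + (1/3)^Suc K)^b)" using hi1 by simp
  show ?thesis
  proof (intro exI[of _ c'] conjI allI impI lo1 hi2)
    fix i assume iq: "i < q"
    have ci: "c i \<in> cE K" using inv iq by auto
    have e2: "2*g0/3 = 2*(1/3)^Suc K" unfolding g0_def by simp
    show "c' i \<in> cE (Suc K)" using c' iq cE_Suc[OF ci] e2 by (auto simp del: cE.simps)
    show "c i \<le> c' i" using c' iq g0pos by auto
    show "c' i + (1/3)^Suc K \<le> c i + (1/3)^K" using c' iq g0_def by auto
  qed
qed

lemma GL:
  fixes b q L :: nat and p \<tau> :: real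
  assumes pE: "p \<in> cE L" and p0: "0 \<le> p" and ph: "p + (1/3)^L \<le> 1"
    and bal: "(real q - 1) * p^(b-1) \<ge> 1"
    and t1: "real q * p^b \<le> \<tau>" and t2: "\<tau> \<le> real q * (p + (1/3)^L)^b"
  shows "\<exists>z. (\<forall>i<q. z i \<in> cantor_set) \<and> (\<Sum>i<q. z i ^ b) = \<tau>"
proof -
  define H where "H = p + (1/3)^L"
  define P where "P = (\<lambda>n (c::nat\<Rightarrow>real). (\<forall>i<q. c i \<in> cE (L+n) \<and> p \<le> c i \<and> c i + (1/3)^(L+n) \<le> H)
      \<and> (\<Sum>i<q. c i ^ b) \<le> \<tau> \<and> \<tau> \<le> (\<Sum>i<q. (c i + (1/3)^(L+n))^b))"
  define Q where "Q = (\<lambda>n (c::nat\<Rightarrow>real) c'. \<forall>i<q. c i \<le> c' i \<and> c' i + (1/3)^(L + Suc n) \<le> c i + (1/3)^(L+n))"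
  have "\<exists>f. \<forall>n. P n (f n) \<and> Q n (f n) (f (Suc n))"
  proof (rule dependent_nat_choice)
    show "\<exists>x. P 0 x" unfolding P_def H_def using pE t1 t2 by (intro exI[of _ "\<lambda>_. p"]) auto
  next
    fix c n assume Pc: "P n c"
    from round[of H p q b c "L+n" \<tau>] Pc ph bal p0
    obtain c' where c': "\<forall>i<q. c' i \<in> cE (Suc (L+n)) \<and> c i \<le> c' i \<and> c' i + (1/3)^(Suc (L+n)) \<le> c i + (1/3)^(L+n)"
      "(\<Sum>i<q. c' i ^ b) \<le> \<tau>" "\<tau> \<le> (\<Sum>i<q. (c' i + (1/3)^(Suc (L+n)))^b)"
      unfolding P_def H_def by blast
    show "\<exists>y. P (Suc n) y \<and> Q n c y"
    proof (intro exI conjI)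
      show "P (Suc n) c'" unfolding P_def using c' Pc unfolding P_def
        by (auto intro: order_trans)
      show "Q n c c'" unfolding Q_def using c' by auto
    qed
  qed
  then obtain f where f: "\<And>n. P n (f n)" "\<And>n. Q n (f n) (f (Suc n))" by blast
  have mono: "f n i \<le> f (n+d) i" if "i < q" for n d i
  proof (induction d)
    case (Suc d) thus ?case using f(2)[of "n+d"] that unfolding Q_def by force
  qed simp
  have upper: "f (n+d) i + (1/3)^(L+(n+d)) \<le> f n i + (1/3)^(L+n)" if "i < q" for n d i
  proof (induction d)
    case (Suc d) thus ?case using f(2)[of "n+d"] that unfolding Q_def by force
  qed simp
  have bnd: "f n' i \<le> f n i + (1/3)^(L+n)" if "i < q" for n n' i
  proof (cases "n \<le> n'")
    case True
    then obtain d where "n' = n + d" by (metis le_add_diff_inverse)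
    moreover have pos: "(0::real) \<le> (1/3)^(L+(n+d))" by simp
    have "f (n+d) i \<le> f n i + (1/3)^(L+n)" using upper[OF that, of n d] pos by linarith
    ultimately show ?thesis by simp
  next
    case False
    then obtain d where "n = n' + d" by (metis le_add_diff_inverse nat_le_linear)
    moreover have pos: "(0::real) \<le> (1/3)^(L+(n'+d))" by simp
    have "f n' i \<le> f (n'+d) i + (1/3)^(L+(n'+d))" using mono[OF that, of n' d] pos by linarith
    ultimately show ?thesis by simp
  qed
  define z where "z = (\<lambda>i. SUP n. f n i)"
  have zb: "f n i \<le> z i \<and> z i \<le> f n i + (1/3)^(L+n)" if "i < q" for n i
  proof
    have bdd: "bdd_above (range (\<lambda>n. f n i))" using bnd[OF that, of _ 0] by (auto intro!: bdd_aboveI)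
    show "f n i \<le> z i" unfolding z_def using cSUP_upper[of n UNIV "\<lambda>n. f n i"] bdd by simp
    show "z i \<le> f n i + (1/3)^(L+n)" unfolding z_def using bnd[OF that] by (intro cSUP_least) auto
  qed
  have zC: "z i \<in> cantor_set" if "i < q" for i
  proof (rule in_cantorI[of L])
    fix N assume "L \<le> N"
    then obtain n where n: "N = L + n" by (metis le_add_diff_inverse)
    have "f n i \<in> cE (L+n)" using f(1)[of n] that unfolding P_def by auto
    hence "{f n i .. f n i + (1/3)^(L+n)} \<subseteq> cantor_stage (L+n)" by (rule cE_interval)
    thus "z i \<in> cantor_stage N" using zb[OF that, of n] n by auto
  qed
  have err: "\<bar>(\<Sum>i<q. z i ^ b) - \<tau>\<bar> \<le> real q * (real b * (1/3)^(L+n))" for n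
  proof -
    define g :: real where "g = (1/3)^(L+n)"
    have gp: "g > 0" unfolding g_def by simp
    have Pn: "(\<Sum>i<q. f n i ^ b) \<le> \<tau>" "\<tau> \<le> (\<Sum>i<q. (f n i + g)^b)"
      "\<forall>i<q. p \<le> f n i \<and> f n i + g \<le> H" using f(1)[of n] unfolding P_def g_def by auto
    have H1: "H \<le> 1" unfolding H_def using ph .
    have s1: "(\<Sum>i<q. f n i ^ b) \<le> (\<Sum>i<q. z i ^ b)"
      using zb Pn(3) p0 by (intro sum_mono power_mono) (auto intro: order_trans)
    have zpos: "0 \<le> z i" if "i < q" for i
    proof -
      have "f n i \<le> z i" using zb[OF that, of n] by simp
      moreover have "p \<le> f n i" using Pn(3) that by simp
      ultimately show ?thesis using p0 by linarith
    qed
    have s2: "(\<Sum>i<q. z i ^ b) \<le> (\<Sum>i<q. (f n i + g)^b)"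
    proof (rule sum_mono)
      fix i assume "i \<in> {..<q}"
      hence iq: "i < q" by simp
      show "z i ^ b \<le> (f n i + g)^b" using zb[OF iq, of n] zpos[OF iq] unfolding g_def by (intro power_mono) auto
    qed
    have s3: "(\<Sum>i<q. (f n i + g)^b) - (\<Sum>i<q. f n i ^ b) \<le> real q * (real b * g)"
    proof -
      have "(\<Sum>i<q. (f n i + g)^b - f n i ^ b) \<le> (\<Sum>i<q. real b * g)"
      proof (rule sum_mono)
        fix i assume "i \<in> {..<q}"
        hence w: "p \<le> f n i" "f n i + g \<le> H" using Pn(3) by auto
        have "(f n i + g)^b - f n i ^ b \<le> real b * (f n i + g)^(b-1) * g"
          using pow_diff_bounds[of "f n i" g b] w p0 gp by auto
        also have "(f n i + g)^(b-1) \<le> 1" using w p0 gp H1 by (intro power_le_one) auto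
        hence "real b * (f n i + g)^(b-1) * g \<le> real b * 1 * g" using gp
          by (intro mult_right_mono mult_left_mono) auto
        finally show "(f n i + g)^b - f n i ^ b \<le> real b * g" by simp
      qed
      thus ?thesis by (simp add: sum_subtractf)
    qed
    show ?thesis using s1 s2 s3 Pn(1,2) unfolding g_def by linarith
  qed
  have "(\<Sum>i<q. z i ^ b) = \<tau>"
  proof (rule ccontr)
    assume ne: "(\<Sum>i<q. z i ^ b) \<noteq> \<tau>"
    define D where "D = \<bar>(\<Sum>i<q. z i ^ b) - \<tau>\<bar>"
    have D0: "D > 0" unfolding D_def using ne by simp
    define M where "M = real q * real b + 1"
    have M0: "M > 0" unfolding M_def by (simp add: add_nonneg_pos)
    obtain n where n: "(1/3::real)^n < D / M" using real_arch_pow_inv[of "D/M" "1/3"] D0 M0 by auto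
    have "(1/3::real)^(L+n) \<le> (1/3)^n" by (intro power_decreasing) auto
    hence "real q * (real b * (1/3)^(L+n)) \<le> real q * real b * (1/3)^n"
      by (simp add: mult.assoc mult_left_mono)
    also have "\<dots> \<le> M * (1/3)^n" unfolding M_def by (intro mult_right_mono) auto
    also have "\<dots> < M * (D/M)" using n M0 by (intro mult_strict_left_mono) auto
    also have "\<dots> = D" using M0 by simp
    finally show False using err[of n] unfolding D_def by simp
  qed
  thus ?thesis using zC by blast
qed

lemma one_plus_inv_pow_le_e: "n \<ge> 1 \<Longrightarrow> (1 + 1 / real n)^n \<le> exp 1"
proof -
  assume n: "n \<ge> 1"
  have "1 + 1/real n \<le> exp (1/real n)" using exp_ge_add_one_self[of "1/real n"] by linarith
  hence "(1 + 1 / real n)^n \<le> exp (1 / real n)^n"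
    by (intro power_mono) auto
  also have "exp (1 / real n)^n = exp (real n * (1 / real n))" by (rule exp_of_nat_mult[symmetric])
  also have "real n * (1 / real n) = 1" using n by simp
  finally show ?thesis .
qed

lemma balance_aux: "b \<ge> 2 \<Longrightarrow> (1 - 1 / real b)^(b-1) \<ge> 1/3"
proof -
  assume b: "b \<ge> 2"
  define n where "n = b - 1"
  have n1: "n \<ge> 1" and bn: "b = Suc n" using b unfolding n_def by auto
  have eq: "1 - 1 / real b = 1 / (1 + 1 / real n)" using n1 bn by (simp add: field_simps)
  have pos: "(1 + 1 / real n)^n > 0" by (simp add: add_pos_nonneg)
  have "(1 + 1 / real n)^n \<le> 3" using one_plus_inv_pow_le_e[OF n1] exp_le by linarith
  hence "1/3 \<le> 1 / (1 + 1 / real n)^n" using pos by (simp add: field_simps)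
  also have "\<dots> = (1 - 1 / real b)^(b-1)" unfolding eq n_def[symmetric] by (simp add: power_one_over)
  finally show ?thesis .
qed

lemma GL4:
  fixes b :: nat and \<tau> :: real
  assumes b: "b \<ge> 2" and t: "3 \<le> \<tau>" "\<tau> \<le> 4"
  shows "\<exists>z. (\<forall>i<4. z i \<in> cantor_set) \<and> (\<Sum>i<(4::nat). z i ^ b) = \<tau>"
proof -
  have ex: "\<exists>L. b \<le> 3^L"
  proof
    have "b < 2^b" by (rule less_exp)
    moreover have "(2::nat)^b \<le> 3^b" by (rule power_mono) auto
    ultimately show "b \<le> 3^b" by linarith
  qed
  define L where "L = (LEAST L. b \<le> 3^L)"
  have bL: "b \<le> 3^L" unfolding L_def using LeastI_ex[OF ex] .
  have L1: "L \<ge> 1"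
  proof (rule ccontr)
    assume "\<not> L \<ge> 1" hence "L = 0" by simp
    thus False using bL b by simp
  qed
  have bL': "3^(L-1) < b"
  proof (rule ccontr)
    assume "\<not> 3^(L-1) < b"
    hence "b \<le> 3^(L-1)" by simp
    hence "L \<le> L - 1" unfolding L_def by (rule Least_le)
    thus False using L1 by simp
  qed
  define h :: real where "h = (1/3)^L"
  define p where "p = 1 - h"
  have h0: "h > 0" unfolding h_def by simp
  have hb: "h * real b \<le> 1"
  proof -
    have "real b \<le> 3^L" using bL by (metis of_nat_le_iff of_nat_numeral of_nat_power)
    thus ?thesis unfolding h_def by (simp add: power_one_over field_simps)
  qed
  have hb2: "h * real b \<ge> 1/3"
  proof -
    have "3^(L-1) < real b" using bL' by (metis of_nat_less_iff of_nat_numeral of_nat_power)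
    moreover have "(3::real)^L = 3 * 3^(L-1)" using L1 by (metis power_Suc Suc_diff_1 less_le_trans zero_less_one)
    ultimately have "(3::real)^L < 3 * real b" by simp
    thus ?thesis unfolding h_def by (simp add: power_one_over field_simps)
  qed
  have pE: "p \<in> cE L" unfolding p_def h_def by (rule cE_top)
  have hb': "h \<le> 1 / real b" using hb b by (simp add: field_simps)
  have "1 / real b \<le> 1/2" using b by (simp add: field_simps)
  hence h1: "h \<le> 1/2" using hb' by linarith
  have p0: "0 \<le> p" unfolding p_def using h1 by simp
  have ph: "p + (1/3)^L \<le> 1" unfolding p_def h_def by simp
  have bal: "(real 4 - 1) * p^(b-1) \<ge> 1"
  proof -
    have "1 - 1 / real b \<le> p" unfolding p_def using hb' by simp
    moreover have "0 \<le> 1 - 1 / real b" using b by simp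
    ultimately have "(1 - 1 / real b)^(b-1) \<le> p^(b-1)" by (rule power_mono)
    hence "1/3 \<le> p^(b-1)" using balance_aux[OF b] by linarith
    thus ?thesis by simp
  qed
  have pb: "p^b \<le> 3/4"
  proof -
    have "p \<le> exp (-h)" unfolding p_def using exp_ge_add_one_self[of "-h"] by simp
    hence "p^b \<le> exp (-h)^b" using p0 by (intro power_mono) auto
    also have "exp (-h)^b = exp (- (h * real b))" by (simp add: exp_of_nat_mult[symmetric] algebra_simps)
    also have "\<dots> \<le> exp (-(1/3))" using hb2 by simp
    also have "exp (-(1/3::real)) = 1 / exp (1/3)" by (simp add: exp_minus field_simps)
    also have "\<dots> \<le> 3/4"
    proof -
      have "4/3 \<le> exp (1/3::real)" using exp_ge_add_one_self[of "1/3::real"] by simp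
      thus ?thesis by (simp add: field_simps)
    qed
    finally show ?thesis .
  qed
  have t1: "real 4 * p^b \<le> \<tau>" using pb t by simp
  have t2: "\<tau> \<le> real 4 * (p + (1/3)^L)^b" using t unfolding p_def h_def by simp
  from GL[OF pE p0 ph bal t1 t2] show ?thesis by simp
qed

definition Sn :: "nat \<Rightarrow> nat \<Rightarrow> nat \<Rightarrow> real set" where
  "Sn e b n = {t. \<exists>\<xi> \<eta>. (\<forall>i<n. \<xi> i \<in> cantor_set \<and> \<eta> i \<in> cantor_set) \<and> t = (\<Sum>i<n. \<xi> i ^ e * \<eta> i ^ b)}"

lemma sum_split_add: "(\<Sum>i<p+q. F i) = (\<Sum>i<p. F i) + (\<Sum>i<q. F (i + p))" for p q :: nat
proof -
  have "(\<Sum>i<p+q. F i) = (\<Sum>i\<in>{0..<p}. F i) + (\<Sum>i\<in>{p..<p+q}. F i)"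
    by (simp add: lessThan_atLeast0 sum.atLeastLessThan_concat)
  also have "(\<Sum>i\<in>{p..<p+q}. F i) = (\<Sum>i\<in>{0+p..<q+p}. F i)" by (simp add: add.commute)
  also have "\<dots> = (\<Sum>i\<in>{0..<q}. F (i + p))" by (rule sum.shift_bounds_nat_ivl)
  finally show ?thesis by (simp add: lessThan_atLeast0)
qed

lemma Sn_add: "x \<in> Sn e b p \<Longrightarrow> y \<in> Sn e b q \<Longrightarrow> x + y \<in> Sn e b (p+q)"
proof -
  assume "x \<in> Sn e b p" "y \<in> Sn e b q"
  then obtain \<xi>1 \<eta>1 \<xi>2 \<eta>2 where 1: "\<forall>i<p. \<xi>1 i \<in> cantor_set \<and> \<eta>1 i \<in> cantor_set" "x = (\<Sum>i<p. \<xi>1 i ^ e * \<eta>1 i ^ b)"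
    and 2: "\<forall>i<q. \<xi>2 i \<in> cantor_set \<and> \<eta>2 i \<in> cantor_set" "y = (\<Sum>i<q. \<xi>2 i ^ e * \<eta>2 i ^ b)"
    unfolding Sn_def by blast
  define \<xi> where "\<xi> = (\<lambda>i. if i < p then \<xi>1 i else \<xi>2 (i - p))"
  define \<eta> where "\<eta> = (\<lambda>i. if i < p then \<eta>1 i else \<eta>2 (i - p))"
  have "(\<Sum>i<p+q. \<xi> i ^ e * \<eta> i ^ b) = (\<Sum>i<p. \<xi> i ^ e * \<eta> i ^ b) + (\<Sum>i<q. \<xi> (i+p) ^ e * \<eta> (i+p) ^ b)"
    by (rule sum_split_add)
  also have "(\<Sum>i<p. \<xi> i ^ e * \<eta> i ^ b) = x" unfolding 1 \<xi>_def \<eta>_def by (rule sum.cong) auto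
  also have "(\<Sum>i<q. \<xi> (i+p) ^ e * \<eta> (i+p) ^ b) = y" unfolding 2 \<xi>_def \<eta>_def by (rule sum.cong) auto
  finally have "x + y = (\<Sum>i<p+q. \<xi> i ^ e * \<eta> i ^ b)" by simp
  moreover have "\<forall>i<p+q. \<xi> i \<in> cantor_set \<and> \<eta> i \<in> cantor_set"
    unfolding \<xi>_def \<eta>_def using 1 2 by auto
  ultimately show ?thesis unfolding Sn_def by blast
qed

lemma Sn_empty: "0 \<in> Sn e b 0" unfolding Sn_def by auto

lemma Sn_zero: "e \<ge> 1 \<Longrightarrow> 0 \<in> Sn e b n"
  unfolding Sn_def
  apply (rule CollectI)
  apply (rule exI[of _ "\<lambda>_. 0"], rule exI[of _ "\<lambda>_. 0"])
  using zero_cantor by simp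

lemma Sn_one: "x \<in> cantor_set \<Longrightarrow> x ^ e \<in> Sn e b 1"
  unfolding Sn_def using one_cantor
  by (intro CollectI exI[of _ "\<lambda>_. x"] exI[of _ "\<lambda>_. 1"] conjI) auto

lemma Sn_rep: "x \<in> cantor_set \<Longrightarrow> real n * x ^ e \<in> Sn e b n"
proof (induction n)
  case 0 thus ?case using Sn_empty by simp
next
  case (Suc n)
  from Sn_add[OF Suc.IH[OF Suc.prems] Sn_one[OF Suc.prems]] show ?case
    by (simp add: algebra_simps)
qed

lemma Sn_mono: "e \<ge> 1 \<Longrightarrow> t \<in> Sn e b p \<Longrightarrow> p \<le> q \<Longrightarrow> t \<in> Sn e b q"
  using Sn_add[of t e b p 0 "q - p"] Sn_zero[of e b "q-p"] by simp

lemma Sn_scale: "t \<in> Sn e b n \<Longrightarrow> (1/3)^e * t \<in> Sn e b n"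
proof -
  assume "t \<in> Sn e b n"
  then obtain \<xi> \<eta> where 1: "\<forall>i<n. \<xi> i \<in> cantor_set \<and> \<eta> i \<in> cantor_set" "t = (\<Sum>i<n. \<xi> i ^ e * \<eta> i ^ b)"
    unfolding Sn_def by blast
  have "(1/3)^e * t = (\<Sum>i<n. (1/3)^e * (\<xi> i ^ e * \<eta> i ^ b))"
    unfolding 1 by (rule sum_distrib_left)
  also have "\<dots> = (\<Sum>i<n. (\<xi> i / 3) ^ e * \<eta> i ^ b)"
  proof (rule sum.cong)
    fix i
    have "(\<xi> i / 3) ^ e = (1/3)^e * \<xi> i ^ e" by (simp add: power_mult_distrib[symmetric])
    thus "(1/3)^e * (\<xi> i ^ e * \<eta> i ^ b) = (\<xi> i / 3) ^ e * \<eta> i ^ b" by simp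
  qed simp
  finally have A: "(1/3)^e * t = (\<Sum>i<n. (\<xi> i / 3) ^ e * \<eta> i ^ b)" .
  have B: "\<forall>i<n. \<xi> i / 3 \<in> cantor_set \<and> \<eta> i \<in> cantor_set" using 1 cantor_div3 by auto
  show ?thesis unfolding Sn_def
    by (rule CollectI, rule exI[of _ "\<lambda>i. \<xi> i / 3"], rule exI[of _ \<eta>], rule conjI[OF B A])
qed

lemma Sn_block: "x \<in> cantor_set \<Longrightarrow> b \<ge> 2 \<Longrightarrow> 3 \<le> \<tau> \<Longrightarrow> \<tau> \<le> 4 \<Longrightarrow> x ^ e * \<tau> \<in> Sn e b 4"
proof -
  assume x: "x \<in> cantor_set" and b: "b \<ge> 2" and t: "3 \<le> \<tau>" "\<tau> \<le> 4"
  from GL4[OF b t] obtain z where z: "\<forall>i<4. z i \<in> cantor_set" "(\<Sum>i<(4::nat). z i ^ b) = \<tau>" by blast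
  have "x ^ e * \<tau> = x ^ e * (\<Sum>i<(4::nat). z i ^ b)" using z(2) by simp
  also have "\<dots> = (\<Sum>i<4. x ^ e * z i ^ b)" by (rule sum_distrib_left)
  finally have "x ^ e * \<tau> = (\<Sum>i<4. x ^ e * z i ^ b)" .
  hence A: "x ^ e * \<tau> = (\<Sum>i<4. (\<lambda>_. x) i ^ e * z i ^ b)" by simp
  have B: "\<forall>i<4. (\<lambda>_. x) i \<in> cantor_set \<and> z i \<in> cantor_set" using z(1) x by simp
  show ?thesis unfolding Sn_def
    by (rule CollectI, rule exI[of _ "\<lambda>_. x"], rule exI[of _ z], rule conjI[OF B A])
qed

lemma covA:
  assumes e: "e \<ge> 1" and b: "b \<ge> 2" and r: "r \<ge> 4" and t: "3 \<le> t" "t \<le> real r"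
  shows "t \<in> Sn e b r"
proof -
  obtain n1 :: nat where n1: "n1 + 4 \<le> r" "3 \<le> t - real n1" "t - real n1 \<le> 4"
  proof (cases "t \<le> 4")
    case True thus ?thesis using that[of 0] r t by auto
  next
    case False
    define n where "n = \<lceil>t - 4\<rceil>"
    have n1: "n \<ge> 1" unfolding n_def using False by simp
    have a: "t - 4 \<le> n" "n < t - 3" unfolding n_def by linarith+
    have c: "n \<le> int r - 4" unfolding n_def using t(2) by linarith
    define k where "k = nat n"
    have kk: "real k = real_of_int n" unfolding k_def using n1 by simp
    have k1: "t - 4 \<le> real k" "real k < t - 3" using a kk by simp_all
    have "real_of_int n \<le> real r - 4" using c by linarith
    hence "real (k + 4) \<le> real r" using kk by simp
    hence k2: "k + 4 \<le> r" by (simp only: of_nat_le_iff)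
    show ?thesis using that[of k] k1 k2 by linarith
  qed
  have "real n1 * 1 ^ e \<in> Sn e b n1" using Sn_rep[OF one_cantor] .
  moreover have "1 ^ e * (t - real n1) \<in> Sn e b 4" using Sn_block[OF one_cantor b n1(2,3)] .
  ultimately have "real n1 * 1 ^ e + 1 ^ e * (t - real n1) \<in> Sn e b (n1 + 4)" by (rule Sn_add)
  hence "t \<in> Sn e b (n1 + 4)" by simp
  thus ?thesis using Sn_mono[OF e _ n1(1)] by blast
qed

lemma covB:
  assumes e: "e \<ge> 1" and b: "b \<ge> 2" and M: "M \<ge> 3 + 2^(e+1)"
    and t: "3 * (1/3)^e \<le> t" "t \<le> 1 + 3 * (1/3)^e"
  shows "t \<in> Sn e b M"
proof -
  define u :: real where "u = (1/3)^e"
  define w :: real where "w = (2/3)^e"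
  have u0: "u > 0" unfolding u_def by simp
  have wu: "w = 2^e * u" unfolding u_def w_def by (simp add: power_divide)
  have w0: "w > 0" unfolding w_def by simp
  define n where "n = nat \<lfloor>(t - 3*u)/w\<rfloor>"
  have fl0: "\<lfloor>(t - 3*u)/w\<rfloor> \<ge> 0" using t w0 unfolding u_def by simp
  have nle: "real n \<le> (t - 3*u)/w" unfolding n_def using fl0 by linarith
  have ngt: "(t - 3*u)/w < real n + 1" unfolding n_def using fl0 by linarith
  have "(t - 3*u)/w \<le> 1/w" using t w0 unfolding u_def by (intro divide_right_mono) auto
  also have "1/w = (3/2)^e" unfolding w_def by (simp add: power_divide)
  also have "(3/2::real)^e \<le> 2^e" by (intro power_mono) auto
  finally have n2: "real n \<le> 2^e" using nle by linarith
  hence n2': "n \<le> 2^e" by (metis of_nat_le_iff of_nat_numeral of_nat_power)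
  define t2 where "t2 = t - real n * w"
  have t2a: "3*u \<le> t2" unfolding t2_def using nle w0 by (simp add: field_simps)
  have t2b: "t2 < 3*u + w" unfolding t2_def using ngt w0 by (simp add: field_simps)
  have Mn: "M - n \<ge> 3 + 2^e"
  proof -
    have "(2::nat)^(e+1) = 2 * 2^e" by simp
    thus ?thesis using M n2' by linarith
  qed
  have M4: "M - n \<ge> 4"
  proof -
    have "(1::nat) \<le> 2^e" by simp
    thus ?thesis using Mn by linarith
  qed
  have "t2 / u \<in> Sn e b (M - n)"
  proof (rule covA[OF e b M4])
    show "3 \<le> t2 / u" using t2a u0 by (simp add: field_simps)
    have "t2 / u < 3 + 2^e" using t2b u0 wu by (simp add: field_simps)
    also have "(3 + 2^e :: real) \<le> real (M - n)" using Mn by (metis of_nat_le_iff of_nat_add of_nat_numeral of_nat_power)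
    finally show "t2 / u \<le> real (M - n)" by simp
  qed
  hence "u * (t2 / u) \<in> Sn e b (M - n)" using Sn_scale unfolding u_def by blast
  hence A: "t2 \<in> Sn e b (M - n)" using u0 by simp
  have B: "real n * (2/3) ^ e \<in> Sn e b n" by (rule Sn_rep[OF twothirds_cantor])
  from Sn_add[OF B A] have "real n * (2/3)^e + t2 \<in> Sn e b (n + (M - n))" .
  moreover have "n \<le> M" using Mn by linarith
  ultimately show ?thesis unfolding t2_def w_def by simp
qed

lemma covTop:
  assumes e: "e \<ge> 1" and b: "b \<ge> 2" and r: "r \<ge> 5 + 2^(e+1)"
    and t: "3 * (1/3)^e \<le> t" "t \<le> real r"
  shows "t \<in> Sn e b r"
proof -
  define u :: real where "u = (1/3)^e"
  have u0: "u > 0" unfolding u_def by simp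
  have u1: "u \<le> 1/3"
  proof -
    have "(1/3::real)^e \<le> (1/3)^1" using e by (intro power_decreasing) auto
    thus ?thesis unfolding u_def by simp
  qed
  have r4: "r \<ge> 4" using r by linarith
  define M where "M = r - 2"
  have M: "M \<ge> 3 + 2^(e+1)" unfolding M_def using r by linarith
  have rM: "r = M + 2" unfolding M_def using r by linarith
  show ?thesis
  proof (cases "t \<ge> 3")
    case True thus ?thesis using covA[OF e b r4 True t(2)] by simp
  next
    case False
    show ?thesis
    proof (cases "t \<le> 1 + 3*u")
      case True
      have tM: "t \<in> Sn e b M" using covB[OF e b M] t True unfolding u_def by simp
      show ?thesis using Sn_mono[OF e tM, of r] rM by simp
    next
      case c1: False
      show ?thesis
      proof (cases "t \<le> 2 + 3*u")
        case True
        have "t - 1 \<in> Sn e b M" using covB[OF e b M, of "t-1"] c1 True unfolding u_def by simp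
        from Sn_add[OF this Sn_one[OF one_cantor, of e b]]
        have tM: "t \<in> Sn e b (M + 1)" by simp
        show ?thesis using Sn_mono[OF e tM, of r] rM by simp
      next
        case c2: False
        have h1: "3 * (1/3)^e \<le> t - 2" using c2 unfolding u_def by linarith
        have h2: "t - 2 \<le> 1 + 3 * (1/3)^e" using False u0 unfolding u_def by linarith
        have "t - 2 \<in> Sn e b M" using covB[OF e b M h1 h2] .
        from Sn_add[OF this Sn_rep[OF one_cantor, of 2 e b]]
        have "t \<in> Sn e b (M + 2)" by simp
        thus ?thesis using rM by simp
      qed
    qed
  qed
qed

lemma covAll:
  assumes e: "e \<ge> 1" and b: "b \<ge> 2" and r: "r \<ge> 5 + 2^(e+1)"
    and t: "0 \<le> t" "t \<le> real r"
  shows "t \<in> Sn e b r"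
proof -
  define u :: real where "u = (1/3)^e"
  have u0: "u > 0" unfolding u_def by simp
  have u1: "u < 1" unfolding u_def using e by (simp add: power_less_one_iff)
  have r3: "real r \<ge> 3" using r by linarith
  have claim: "\<forall>t. 3 * u^(Suc j) \<le> t \<and> t \<le> real r \<longrightarrow> t \<in> Sn e b r" for j
  proof (induction j)
    case 0 thus ?case using covTop[OF e b r] unfolding u_def by simp
  next
    case (Suc j)
    show ?case
    proof (intro allI impI)
      fix t assume tt: "3 * u^(Suc (Suc j)) \<le> t \<and> t \<le> real r"
      show "t \<in> Sn e b r"
      proof (cases "3 * u^(Suc j) \<le> t")
        case True thus ?thesis using Suc.IH tt by blast
      next
        case False
        have a: "3 * u^(Suc j) \<le> t / u" using tt u0 by (simp add: field_simps)
        have "t / u < 3 * u^j" using False u0 by (simp add: field_simps)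
        also have "3 * u^j \<le> 3" using u0 u1 by (simp add: power_le_one)
        finally have "t / u \<le> real r" using r3 by linarith
        hence "t / u \<in> Sn e b r" using Suc.IH a by blast
        hence "(1/3)^e * (t / u) \<in> Sn e b r" by (rule Sn_scale)
        thus ?thesis using u0 unfolding u_def by simp
      qed
    qed
  qed
  show ?thesis
  proof (cases "t = 0")
    case True thus ?thesis using Sn_zero[OF e] by simp
  next
    case False
    hence tp: "t > 0" using t by simp
    obtain j where j: "u^j < t/3" using real_arch_pow_inv[of "t/3" u] tp u1 by auto
    have "u^(Suc j) \<le> u^j" using u0 u1 by (simp add: power_decreasing)
    hence "3 * u^(Suc j) \<le> t" using j by linarith
    thus ?thesis using claim[of j] t by blast
  qed
qed

lemma bern_powr:
  fixes p x :: real
  assumes p: "p \<ge> 1" and x: "x \<ge> 0"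
  shows "1 + p * x \<le> (1 + x) powr p"
proof -
  have a: "0 < 1 + p * x" using p x by (simp add: add_pos_nonneg)
  have "(1 + p*x) powr (1/p) * 1 powr (1 - 1/p) \<le> (1/p) * (1 + p*x) + (1 - 1/p) * 1"
    using p a by (intro Youngs_inequality_0) auto
  also have "\<dots> = 1 + x" using p by (simp add: field_simps)
  finally have A: "(1 + p*x) powr (1/p) \<le> 1 + x" by simp
  have "1 + p*x = ((1 + p*x) powr (1/p)) powr p" using a p by (simp add: powr_powr)
  also have "\<dots> \<le> (1 + x) powr p" using A p by (intro powr_mono2) auto
  finally show ?thesis .
qed

lemma X_gt4:
  fixes s :: nat
  assumes s: "s \<ge> 3"
  shows "((real s + 3) / (real s - 2)) powr (real s / 2 - 1) * ((5 * real s + 6) / (5 * real s - 6)) > 4"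
proof -
  define B where "B = (real s + 3) / (real s - 2)"
  define p where "p = real s / 2 - 1"
  define F where "F = (5 * real s + 6) / (5 * real s - 6)"
  define x where "x = 5 / (real s - 2)"
  have s3: "real s \<ge> 3" using s by simp
  have Bx: "B = 1 + x" unfolding B_def x_def using s3 by (simp add: field_simps)
  have x0: "x \<ge> 0" unfolding x_def using s3 by simp
  have px: "p * x = 5/2" unfolding p_def x_def using s3 by (simp add: field_simps)
  have F1: "F \<ge> 1" unfolding F_def using s3 by (simp add: field_simps)
  have Bpos: "B > 0" using Bx x0 by simp
  have "B powr p * F > 4"
  proof (cases "s = 3")
    case True
    have v: "B = 6" "p = 1/2" "F = 21/9" unfolding B_def p_def F_def using True by simp_all
    have "(6::real) powr (1/2) \<ge> 2"
    proof -
      have "(4::real) powr (1/2) \<le> 6 powr (1/2)" by (intro powr_mono2) auto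
      moreover have "(4::real) powr (1/2) = 2" by (simp add: powr_half_sqrt)
      ultimately show ?thesis by simp
    qed
    hence "2 * (21/9) \<le> (6::real) powr (1/2) * (21/9)" by (intro mult_right_mono) auto
    thus ?thesis unfolding v by simp
  next
    case False
    hence s4: "real s \<ge> 4" using s by simp
    show ?thesis
    proof (cases "s \<ge> 6")
      case True
      have p2: "p/2 \<ge> 1" unfolding p_def using True by simp
      have "1 + (p/2) * x \<le> (1 + x) powr (p/2)" using bern_powr[OF p2 x0] .
      hence h: "9/4 \<le> B powr (p/2)" using px Bx by simp
      have "B powr p = B powr (p/2) * B powr (p/2)" using Bpos by (simp add: powr_add[symmetric])
      also have "\<dots> \<ge> 9/4 * (9/4)" using h by (intro mult_mono) auto
      finally have "B powr p \<ge> 81/16" by simp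
      moreover have "B powr p * F \<ge> B powr p" using F1 by (simp add: mult_le_cancel_left1)
      ultimately show ?thesis by simp
    next
      case False
      hence s5: "real s \<le> 5" by simp
      have p1: "p \<ge> 1" unfolding p_def using s4 by simp
      have h: "7/2 \<le> B powr p" using bern_powr[OF p1 x0] px Bx by simp
      have F8: "F > 8/7" unfolding F_def using s4 s5 by (simp add: field_simps)
      have "7/2 * (8/7) < B powr p * F" using h F8 by (intro mult_le_less_imp_less) auto
      thus ?thesis by simp
    qed
  qed
  thus ?thesis unfolding B_def p_def F_def .
qed

lemma two_pow_ge: "E \<ge> 1 \<Longrightarrow> 2 * E \<le> (2::nat)^E"
proof (induction E rule: nat_induct_at_least)
  case base thus ?case by simp
next
  case (Suc n)
  have "(2::nat)^1 \<le> 2^n" using Suc.hyps by (intro power_increasing) auto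
  hence "2 \<le> (2::nat)^n" by simp
  thus ?case using Suc.IH by simp
qed

lemma sum_closed: "(\<Sum>e\<in>{1..E}. 4 + 2^(e+1)) + 4 = 4*E + (2::nat)^(E+2)"
proof (induction E)
  case 0 thus ?case by simp
next
  case (Suc E)
  have "{1..Suc E} = insert (Suc E) {1..E}" by (auto simp: atLeastAtMostSuc_conv)
  hence "(\<Sum>e\<in>{1..Suc E}. 4 + 2^(e+1)) = (4 + 2^(Suc E + 1)) + (\<Sum>e\<in>{1..E}. 4 + (2::nat)^(e+1))" by simp
  thus ?case using Suc.IH by simp
qed

lemma pigeon:
  fixes m E :: nat and f :: "nat \<Rightarrow> nat"
  assumes f: "\<forall>i\<in>{1..m}. f i \<in> {1..E}" and mE: "real m \<ge> 6 * 2^E" and E1: "E \<ge> 1"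
  shows "\<exists>e\<in>{1..E}. card {i\<in>{1..m}. f i = e} \<ge> 5 + 2^(e+1)"
proof (rule ccontr)
  assume "\<not> ?thesis"
  hence le: "\<forall>e\<in>{1..E}. card {i\<in>{1..m}. f i = e} \<le> 4 + 2^(e+1)" by auto
  have eq: "(\<Union>e\<in>{1..E}. {i\<in>{1..m}. f i = e}) = {1..m}" using f by auto
  have "card (\<Union>e\<in>{1..E}. {i\<in>{1..m}. f i = e}) \<le> (\<Sum>e\<in>{1..E}. card {i\<in>{1..m}. f i = e})"
    by (rule card_UN_le) simp
  hence "card {1..m} \<le> (\<Sum>e\<in>{1..E}. card {i\<in>{1..m}. f i = e})" by (simp only: eq)
  also have "\<dots> \<le> (\<Sum>e\<in>{1..E}. 4 + 2^(e+1))" using le by (intro sum_mono) auto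
  finally have "m + 4 \<le> 4*E + 2^(E+2)" using sum_closed[of E] by simp
  moreover have "2*E \<le> 2^E" using two_pow_ge[OF E1] .
  moreover have "(2::nat)^(E+2) = 4 * 2^E" by simp
  ultimately have "m + 4 \<le> 6 * 2^E" by linarith
  hence "real (m + 4) \<le> real (6 * 2^E)" by (simp only: of_nat_le_iff)
  hence "real m + 4 \<le> 6 * 2^E" by simp
  thus False using mE by linarith
qed

lemma assemble:
  fixes a :: "nat \<Rightarrow> nat" and m s e :: nat and I :: "nat set" and t :: real
  assumes I: "I \<subseteq> {1..m}" and r1: "card I \<ge> 1"
    and Iprop: "\<forall>i\<in>I. (a(2*i-1) = e \<and> a(2*i) = s - e) \<or> (a(2*i) = e \<and> a(2*i-1) = s - e)"
    and pos: "\<forall>i\<in>{1..m}. a(2*i-1) > 0 \<and> a(2*i) > 0"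
    and cov: "\<forall>t. 0 \<le> t \<and> t \<le> real (card I) \<longrightarrow> t \<in> Sn e (s-e) (card I)"
    and t: "0 \<le> t" "t \<le> real m"
  shows "\<exists>x. (\<forall>j\<in>{1..2*m}. x j \<in> cantor_set) \<and> t = (\<Sum>i=1..m. x(2*i-1)^a(2*i-1) * x(2*i)^a(2*i))"
proof -
  define r where "r = card I"
  have fI: "finite I" using I finite_subset by blast
  have rm: "r \<le> m" unfolding r_def using card_mono[OF _ I] by simp
  obtain n :: nat and t1 :: real where tn: "t = t1 + real n" "0 \<le> t1" "t1 \<le> real r" "n \<le> m - r"
  proof (cases "t \<le> real r")
    case True thus ?thesis using that[of t 0] t by simp
  next
    case False
    define c where "c = \<lceil>t - real r\<rceil>"
    have c0: "c \<ge> 1" unfolding c_def using False by simp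
    have ca: "t - real r \<le> c" "c < t - real r + 1" unfolding c_def by linarith+
    have cb: "c \<le> int m - int r" unfolding c_def using t(2) by linarith
    define n where "n = nat c"
    have nn: "real n = real_of_int c" unfolding n_def using c0 by simp
    have "real n \<le> real m - real r" using cb nn by linarith
    hence "real (n + r) \<le> real m" by simp
    hence n2: "n \<le> m - r" by (simp only: of_nat_le_iff)
    have r1': "real r \<ge> 1" using r1 unfolding r_def by simp
    have A: "0 \<le> t - real n" using ca nn r1' by linarith
    have B: "t - real n \<le> real r" using ca nn by linarith
    show ?thesis by (rule that[of "t - real n" n]) (use A B n2 in auto)
  qed
  have "t1 \<in> Sn e (s-e) r" using cov tn(2,3) unfolding r_def by blast
  then obtain \<xi> \<eta> where xe: "\<forall>i<r. \<xi> i \<in> cantor_set \<and> \<eta> i \<in> cantor_set"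
    "t1 = (\<Sum>i<r. \<xi> i ^ e * \<eta> i ^ (s-e))" unfolding Sn_def by blast
  obtain g where g: "bij_betw g {0..<r} I" using ex_bij_betw_nat_finite[OF fI] unfolding r_def by blast
  have g': "bij_betw g {..<r} I" using g by (simp add: atLeast0LessThan)
  define J where "J = {1..m} - I"
  have cJ: "card J = m - r" unfolding J_def r_def using card_Diff_subset[OF fI I] by simp
  obtain Ob where Ob: "Ob \<subseteq> J" "card Ob = n" "finite Ob" using obtain_subset_with_card_n[of n J] cJ tn(4) by auto
  define X where "X = (\<lambda>i. \<xi> (inv_into {..<r} g i))"
  define Y where "Y = (\<lambda>i. \<eta> (inv_into {..<r} g i))"
  define x where "x = (\<lambda>j. let i = (j+1) div 2 in if i \<in> I then (if (j = 2*i-1) = (a(2*i-1) = e) then X i else Y i)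
                            else if i \<in> Ob then 1 else (0::real))"
  have invI: "inv_into {..<r} g i \<in> {..<r}" if "i \<in> I" for i
  proof -
    have "g ` {..<r} = I" using g' by (simp add: bij_betw_def)
    hence "i \<in> g ` {..<r}" using that by simp
    thus ?thesis by (rule inv_into_into)
  qed
  have XY: "X i \<in> cantor_set \<and> Y i \<in> cantor_set" if "i \<in> I" for i
    using xe(1) invI[OF that] unfolding X_def Y_def by auto
  have xC: "\<forall>j\<in>{1..2*m}. x j \<in> cantor_set"
  proof
    fix j assume "j \<in> {1..2*m}"
    show "x j \<in> cantor_set" unfolding x_def Let_def using XY zero_cantor one_cantor by auto
  qed
  have d1: "(2*i-1+1) div 2 = i" if "i \<ge> 1" for i :: nat using that by simp
  have d2: "(2*i+1) div 2 = i" for i :: nat by simp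
  have OI: "Ob \<inter> I = {}" using Ob(1) unfolding J_def by auto
  have trm: "x(2*i-1)^a(2*i-1) * x(2*i)^a(2*i) =
      (if i \<in> I then X i ^ e * Y i ^ (s-e) else 0) + (if i \<in> Ob then 1 else 0)" if i: "i \<in> {1..m}" for i
  proof -
    have i1: "i \<ge> 1" using i by simp
    have x1: "x (2*i-1) = (if i \<in> I then (if a(2*i-1) = e then X i else Y i) else if i \<in> Ob then 1 else 0)"
      unfolding x_def Let_def d1[OF i1] by simp
    have x2: "x (2*i) = (if i \<in> I then (if a(2*i-1) = e then Y i else X i) else if i \<in> Ob then 1 else 0)"
      unfolding x_def Let_def d2 using i1 by auto
    have pa: "a(2*i-1) > 0" "a(2*i) > 0" using pos i by auto
    show ?thesis
    proof (cases "i \<in> I")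
      case True
      hence "i \<notin> Ob" using OI by auto
      have dj: "(a(2*i-1) = e \<and> a(2*i) = s - e) \<or> (a(2*i) = e \<and> a(2*i-1) = s - e)" using Iprop True by blast
      consider "a(2*i-1) = e" "a(2*i) = s - e" | "a(2*i) = e" "a(2*i-1) = s - e" "a(2*i-1) \<noteq> e"
        using dj by (cases "a(2*i-1) = e") auto
      thus ?thesis
      proof cases
        case 1 thus ?thesis using x1 x2 True \<open>i \<notin> Ob\<close> by simp
      next
        case 2 thus ?thesis using x1 x2 True \<open>i \<notin> Ob\<close> by (simp add: mult.commute)
      qed
    next
      case False
      thus ?thesis using x1 x2 pa by (cases "i \<in> Ob") (auto simp: zero_power)
    qed
  qed
  have "(\<Sum>i=1..m. x(2*i-1)^a(2*i-1) * x(2*i)^a(2*i)) =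
        (\<Sum>i=1..m. (if i \<in> I then X i ^ e * Y i ^ (s-e) else 0) + (if i \<in> Ob then 1 else 0))"
    using trm by (rule sum.cong[OF refl])
  also have "\<dots> = (\<Sum>i=1..m. (if i \<in> I then X i ^ e * Y i ^ (s-e) else 0)) + (\<Sum>i=1..m. (if i \<in> Ob then 1 else 0))"
    by (rule sum.distrib)
  also have "(\<Sum>i=1..m. (if i \<in> I then X i ^ e * Y i ^ (s-e) else 0)) = (\<Sum>i\<in>I. X i ^ e * Y i ^ (s-e))"
  proof -
    have "{1..m} \<inter> I = I" using I by blast
    moreover have "(\<Sum>i\<in>{1..m} \<inter> I. X i ^ e * Y i ^ (s-e)) = (\<Sum>i=1..m. (if i \<in> I then X i ^ e * Y i ^ (s-e) else 0))"
      by (rule sum.inter_restrict) simp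
    ultimately show ?thesis by simp
  qed
  also have "(\<Sum>i=1..m. (if i \<in> Ob then (1::real) else 0)) = real (card Ob)"
  proof -
    have "{1..m} \<inter> Ob = Ob" using Ob(1) unfolding J_def by blast
    moreover have "(\<Sum>i\<in>{1..m} \<inter> Ob. (1::real)) = (\<Sum>i=1..m. (if i \<in> Ob then 1 else 0))"
      by (rule sum.inter_restrict) simp
    ultimately show ?thesis by simp
  qed
  also have "(\<Sum>i\<in>I. X i ^ e * Y i ^ (s-e)) = (\<Sum>j<r. X (g j) ^ e * Y (g j) ^ (s-e))"
    using sum.reindex_bij_betw[OF g', of "\<lambda>i. X i ^ e * Y i ^ (s-e)"] by simp
  also have "\<dots> = t1"
  proof -
    have inj: "inj_on g {..<r}" using g' bij_betw_def by blast
    have "(\<Sum>j<r. X (g j) ^ e * Y (g j) ^ (s-e)) = (\<Sum>j<r. \<xi> j ^ e * \<eta> j ^ (s-e))"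
      unfolding X_def Y_def using inv_into_f_f[OF inj] by (intro sum.cong) auto
    thus ?thesis using xe(2) by simp
  qed
  finally have "(\<Sum>i=1..m. x(2*i-1)^a(2*i-1) * x(2*i)^a(2*i)) = t" using tn(1) Ob(2) by simp
  hence "t = (\<Sum>i=1..m. x(2*i-1)^a(2*i-1) * x(2*i)^a(2*i))" by simp
  with xC show ?thesis by (intro exI[of _ x] conjI)
qed

theorem theorem1p1:
  fixes s k :: nat and a :: "nat \<Rightarrow> nat"
  assumes "s > 2"
    and "k > 0" and "even k"
    and "\<And>i. 1 \<le> i \<Longrightarrow> i \<le> k \<Longrightarrow> a i > 0"
    and "\<And>i. 1 \<le> i \<Longrightarrow> i \<le> k div 2 \<Longrightarrow> a (2*i - 1) + a (2*i) = s"
    and "real k \<ge> 2 powr (real s / 2 + 1) *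
           real_of_int \<lceil>((real s + 3) / (real s - 2)) powr (real s / 2 - 1)
                         * ((5 * real s + 6) / (5 * real s - 6)) + 1\<rceil>"
  shows "{0 .. real k / 2} =
         {y. \<exists>x :: nat \<Rightarrow> real. (\<forall>i\<in>{1..k}. x i \<in> cantor_set) \<and>
              y = (\<Sum>i=1..k div 2. x (2*i - 1) ^ a (2*i - 1) * x (2*i) ^ a (2*i))}"
proof -
  note s2 = assms(1) and ev = assms(3) and apos = assms(4) and asum = assms(5) and kbd = assms(6)
  define m where "m = k div 2"
  have km: "k = 2*m" using ev unfolding m_def by simp
  have mk: "real k / 2 = real m" using km by simp
  define X where "X = ((real s + 3) / (real s - 2)) powr (real s / 2 - 1) * ((5 * real s + 6) / (5 * real s - 6))"
  have X4: "X > 4" unfolding X_def using X_gt4[of s] s2 by simp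
  have c6: "real_of_int \<lceil>X + 1\<rceil> \<ge> 6"
  proof -
    have "real_of_int \<lceil>X + 1\<rceil> > 5" using X4 by linarith
    hence "\<lceil>X + 1\<rceil> > 5" by linarith
    hence "\<lceil>X + 1\<rceil> \<ge> 6" by simp
    thus ?thesis by linarith
  qed
  define E where "E = s div 2"
  have E1: "E \<ge> 1" using s2 unfolding E_def by simp
  have pw: "2 powr (real s / 2 + 1) \<ge> 2 * 2^E"
  proof -
    have "real E \<le> real s / 2"
    proof -
      have "2 * E \<le> s" unfolding E_def by simp
      hence "2 * real E \<le> real s" by (metis of_nat_le_iff of_nat_mult of_nat_numeral)
      thus ?thesis by simp
    qed
    hence "(2::real) powr real E \<le> 2 powr (real s / 2)" by (intro powr_mono) auto
    moreover have "(2::real) powr real E = 2^E" by (simp add: powr_realpow)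
    moreover have "(2::real) powr (real s / 2 + 1) = 2 powr (real s / 2) * 2" by (simp add: powr_add)
    ultimately show ?thesis by simp
  qed
  have mE: "real m \<ge> 6 * 2^E"
  proof -
    have "real k \<ge> 2 powr (real s / 2 + 1) * real_of_int \<lceil>X + 1\<rceil>" using kbd unfolding X_def by simp
    moreover have "2 powr (real s / 2 + 1) * real_of_int \<lceil>X + 1\<rceil> \<ge> (2 * 2^E) * 6"
      using pw c6 by (intro mult_mono) auto
    ultimately have "real k \<ge> 12 * 2^E" by simp
    thus ?thesis using mk by simp
  qed
  define f where "f = (\<lambda>i. min (a (2*i-1)) (a (2*i)))"
  have pairs: "a (2*i-1) > 0 \<and> a (2*i) > 0 \<and> a (2*i-1) + a (2*i) = s" if "i \<in> {1..m}" for i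
  proof -
    have i: "1 \<le> i" "i \<le> m" using that by auto
    show ?thesis using apos[of "2*i-1"] apos[of "2*i"] asum[of i] i km unfolding m_def by auto
  qed
  have fE: "\<forall>i\<in>{1..m}. f i \<in> {1..E}"
  proof
    fix i assume i: "i \<in> {1..m}"
    have "f i \<ge> 1" using pairs[OF i] unfolding f_def by simp
    moreover have "2 * f i \<le> s" using pairs[OF i] unfolding f_def by linarith
    hence "f i \<le> E" unfolding E_def by linarith
    ultimately show "f i \<in> {1..E}" by simp
  qed
  obtain e where e: "e \<in> {1..E}" and ce: "card {i\<in>{1..m}. f i = e} \<ge> 5 + 2^(e+1)"
    using pigeon[OF fE mE E1] by blast
  define I where "I = {i\<in>{1..m}. f i = e}"
  have e1: "e \<ge> 1" using e by simp
  have b2: "s - e \<ge> 2" using e s2 unfolding E_def by auto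
  have cov: "\<forall>t. 0 \<le> t \<and> t \<le> real (card I) \<longrightarrow> t \<in> Sn e (s-e) (card I)"
    using covAll[OF e1 b2] ce unfolding I_def by blast
  have Iprop: "\<forall>i\<in>I. (a(2*i-1) = e \<and> a(2*i) = s - e) \<or> (a(2*i) = e \<and> a(2*i-1) = s - e)"
  proof
    fix i assume "i \<in> I"
    hence i: "i \<in> {1..m}" "f i = e" unfolding I_def by auto
    show "(a(2*i-1) = e \<and> a(2*i) = s - e) \<or> (a(2*i) = e \<and> a(2*i-1) = s - e)"
      using pairs[OF i(1)] i(2) unfolding f_def by (cases "a(2*i-1) \<le> a(2*i)") auto
  qed
  have posm: "\<forall>i\<in>{1..m}. a(2*i-1) > 0 \<and> a(2*i) > 0" using pairs by blast
  have I: "I \<subseteq> {1..m}" unfolding I_def by auto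
  have r1: "card I \<ge> 1" using ce unfolding I_def by simp
  show ?thesis
  proof (intro equalityI subsetI)
    fix t assume "t \<in> {0 .. real k / 2}"
    hence t: "0 \<le> t" "t \<le> real m" using mk by auto
    from assemble[OF I r1 Iprop posm cov t] obtain x where
      x: "\<forall>j\<in>{1..2*m}. x j \<in> cantor_set" "t = (\<Sum>i=1..m. x(2*i-1)^a(2*i-1) * x(2*i)^a(2*i))" by blast
    have "(\<forall>i\<in>{1..k}. x i \<in> cantor_set) \<and>
              t = (\<Sum>i=1..k div 2. x (2*i - 1) ^ a (2*i - 1) * x (2*i) ^ a (2*i))"
      using x km unfolding m_def by simp
    thus "t \<in> {y. \<exists>x :: nat \<Rightarrow> real. (\<forall>i\<in>{1..k}. x i \<in> cantor_set) \<and>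
              y = (\<Sum>i=1..k div 2. x (2*i - 1) ^ a (2*i - 1) * x (2*i) ^ a (2*i))}" by blast
  next
    fix y assume "y \<in> {y. \<exists>x :: nat \<Rightarrow> real. (\<forall>i\<in>{1..k}. x i \<in> cantor_set) \<and>
              y = (\<Sum>i=1..k div 2. x (2*i - 1) ^ a (2*i - 1) * x (2*i) ^ a (2*i))}"
    then obtain x where x: "\<forall>i\<in>{1..k}. x i \<in> cantor_set"
      and y: "y = (\<Sum>i=1..m. x (2*i - 1) ^ a (2*i - 1) * x (2*i) ^ a (2*i))" unfolding m_def by blast
    have x01: "0 \<le> x j \<and> x j \<le> 1" if "j \<in> {1..k}" for j
    proof -
      have "x j \<in> cantor_set" using x that by blast
      hence "x j \<in> {0..1}" using cantor_subset by blast
      thus ?thesis by simp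
    qed
    have tb: "0 \<le> x (2*i - 1) ^ a (2*i - 1) * x (2*i) ^ a (2*i) \<and> x (2*i - 1) ^ a (2*i - 1) * x (2*i) ^ a (2*i) \<le> 1"
      if "i \<in> {1..m}" for i
    proof -
      have j: "2*i-1 \<in> {1..k}" "2*i \<in> {1..k}" using that km by auto
      have A: "0 \<le> x (2*i-1)" "x (2*i-1) \<le> 1" "0 \<le> x (2*i)" "x (2*i) \<le> 1" using x01[OF j(1)] x01[OF j(2)] by auto
      show ?thesis using A by (auto intro!: mult_le_one power_le_one)
    qed
    have "0 \<le> y" unfolding y using tb by (intro sum_nonneg) auto
    moreover have "y \<le> (\<Sum>i=1..m. (1::real))" unfolding y using tb by (intro sum_mono) auto
    ultimately show "y \<in> {0 .. real k / 2}" using mk by simp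
  qed
qed

end
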